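(* If $n$ and $r$ are positive integers with $n\ge 2r+2$, then $$\rho_2(K(n+1,r+1))\ \ge\ \rho_2(K(n,r)).$$
   Context: For integers $n\ge 2r$, the Kneser graph $K(n,r)$ has as vertices the $r$-element subsets of $[n]=\{1,\dots,n\}$, two vertices being adjacent iff they are disjoint. A $2$-packing of a graph $G$ is a set of vertices pairwise at distance at least $3$ in $G$; $\rho_2(G)$ is the maximum cardinality of a $2$-packing. *)

theory Defs
  imports Main
begin

definition kneser_vertices :: "nat \<Rightarrow> nat \<Rightarrow> nat set set" where
  "kneser_vertices n r = {A. A \<subseteq> {1..n} \<and> card A = r}"

definition kneser_adj :: "nat \<Rightarrow> nat \<Rightarrow> nat set \<Rightarrow> nat set \<Rightarrow> bool" where
  "kneser_adj n r A B \<longleftrightarrow> A \<in> kneser_vertices n r \<and> B \<in> kneser_vertices n r \<and> A \<inter> B = {}"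

text \<open>Distance at least 3 between distinct vertices u, v: they are neither equal,
  nor adjacent, nor have a common neighbour (distance infinity counts as \<ge> 3).\<close>
definition kneser_dist_ge3 :: "nat \<Rightarrow> nat \<Rightarrow> nat set \<Rightarrow> nat set \<Rightarrow> bool" where
  "kneser_dist_ge3 n r u v \<longleftrightarrow> u \<noteq> v \<and> \<not> kneser_adj n r u v \<and>
     \<not> (\<exists>w. kneser_adj n r u w \<and> kneser_adj n r w v)"

definition kneser_2packing :: "nat \<Rightarrow> nat \<Rightarrow> nat set set \<Rightarrow> bool" where
  "kneser_2packing n r P \<longleftrightarrow> P \<subseteq> kneser_vertices n r \<and>
     (\<forall>u\<in>P. \<forall>v\<in>P. u \<noteq> v \<longrightarrow> kneser_dist_ge3 n r u v)"

definition rho2_kneser :: "nat \<Rightarrow> nat \<Rightarrow> nat" where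
  "rho2_kneser n r = Max (card ` {P. kneser_2packing n r P})"

end

theory Submission
  imports Defs
begin

lemma fin_pack: "finite {P. kneser_2packing n r P}"
proof -
  have "{P. kneser_2packing n r P} \<subseteq> Pow (Pow {1..n})"
    by (auto simp: kneser_2packing_def kneser_vertices_def)
  then show ?thesis by (rule finite_subset) simp
qed

lemma ne_pack: "{} \<in> {P. kneser_2packing n r P}"
  by (simp add: kneser_2packing_def)

lemma rho_attained: "\<exists>P. kneser_2packing n r P \<and> card P = rho2_kneser n r"
proof -
  have "rho2_kneser n r \<in> card ` {P. kneser_2packing n r P}"
    unfolding rho2_kneser_def using fin_pack ne_pack
    by (intro Max_in) blast+
  then show ?thesis by auto
qed

lemma rho_ge: "kneser_2packing n r P \<Longrightarrow> card P \<le> rho2_kneser n r"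
  unfolding rho2_kneser_def using fin_pack by (intro Max_ge) auto

theorem theorem4p5:
  fixes n r :: nat
  assumes "0 < r" and "0 < n" and "n \<ge> 2 * r + 2"
  shows "rho2_kneser (n + 1) (r + 1) \<ge> rho2_kneser n r"
proof -
  obtain P where P: "kneser_2packing n r P" and cP: "card P = rho2_kneser n r"
    using rho_attained by blast
  define f where "f = (\<lambda>A::nat set. insert (n+1) A)"
  have PV: "\<And>A. A \<in> P \<Longrightarrow> A \<subseteq> {1..n} \<and> card A = r"
    using P by (auto simp: kneser_2packing_def kneser_vertices_def)
  have notin: "\<And>A. A \<in> P \<Longrightarrow> n+1 \<notin> A" using PV by fastforce
  have finA: "\<And>A. A \<in> P \<Longrightarrow> finite A" using PV by (meson finite_atLeastAtMost finite_subset)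
  have inj: "inj_on f P"
  proof
    fix A B assume "A \<in> P" "B \<in> P" "f A = f B"
    then have "f A - {n+1} = f B - {n+1}" by simp
    then show "A = B" using notin \<open>A \<in> P\<close> \<open>B \<in> P\<close> unfolding f_def by auto
  qed
  have pack: "kneser_2packing (n+1) (r+1) (f ` P)"
    unfolding kneser_2packing_def
  proof (intro conjI subsetI ballI impI)
    fix X assume "X \<in> f ` P"
    then obtain A where "A \<in> P" "X = f A" by blast
    then show "X \<in> kneser_vertices (n + 1) (r + 1)"
      using PV[of A] notin[of A] finA[of A] unfolding f_def kneser_vertices_def by auto
  next
    fix U V assume "U \<in> f ` P" "V \<in> f ` P" "U \<noteq> V"
    then obtain A B where A: "A \<in> P" and B: "B \<in> P" and UV: "U = f A" "V = f B" and ne: "f A \<noteq> f B" by blast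
    then have AB: "A \<noteq> B" by auto
    have d: "kneser_dist_ge3 n r A B" using P A B AB by (auto simp: kneser_2packing_def)
    show "kneser_dist_ge3 (n + 1) (r + 1) U V"
      unfolding kneser_dist_ge3_def UV
    proof (intro conjI notI)
      show "f A = f B \<Longrightarrow> False" using ne by simp
      show "kneser_adj (n + 1) (r + 1) (f A) (f B) \<Longrightarrow> False"
        by (auto simp: kneser_adj_def f_def)
    next
      assume "\<exists>w. kneser_adj (n + 1) (r + 1) (f A) w \<and> kneser_adj (n + 1) (r + 1) w (f B)"
      then obtain w where w: "w \<subseteq> {1..n+1}" "card w = r+1" "w \<inter> f A = {}" "w \<inter> f B = {}"
        by (auto simp: kneser_adj_def kneser_vertices_def)
      have wn: "w \<subseteq> {1..n}"
      proof
        fix x assume "x \<in> w"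
        then have "x \<in> {1..n+1}" "x \<noteq> n+1" using w unfolding f_def by auto
        then show "x \<in> {1..n}" by auto
      qed
      have "finite w" using wn by (meson finite_atLeastAtMost finite_subset)
      obtain w0 where w0: "w0 \<subseteq> w" "card w0 = r"
        using obtain_subset_with_card_n[of r w] w(2) by auto
      have "kneser_adj n r A w0 \<and> kneser_adj n r w0 B"
        using w0 wn w PV[OF A] PV[OF B] unfolding kneser_adj_def kneser_vertices_def f_def
        by auto
      then show False using d unfolding kneser_dist_ge3_def by blast
    qed
  qed
  have "card (f ` P) = card P" using inj by (rule card_image)
  then show ?thesis using rho_ge[OF pack] cP by simp
qed

end
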